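(* Let $\tilde q=q^2$. For all integers $v\geq 1$ and $L\geq 0$, \[ \sum_{n_1,\ldots,n_v\geq 0} \frac{\tilde q^{\sum_{i=1}^v N_i(N_i+1)}}{(\tilde q)_{n_1}\cdots(\tilde q)_{n_{v-1}}(\tilde q)_{2n_v+1}}\cdot\frac{(q^3;q^6)_{n_v}}{(q;q^2)_{n_v}}\cdot\frac{(\tilde q)_{2L+1}}{(\tilde q)_{L-N_1}} =\sum_{j=-\infty}^{\infty} (-1)^j q^{(2v+1)j^2+2vj}\left(\frac{j+1}{3}\right){2L+1 \brack L-j}_{\tilde q}, \] where $N_i=n_i+n_{i+1}+\cdots+n_v$ for $i=1,\ldots,v$ (for $v=1$ the product $(\tilde q)_{n_1}\cdots(\tilde q)_{n_{v-1}}$ is empty).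
   Context: For a variable $a$ and integer $n\ge 0$, $(a;q)_n=(1-a)(1-aq)\cdots(1-aq^{n-1})$, and $(\tilde q)_n=(\tilde q;\tilde q)_n$; by convention $1/(\tilde q)_n=0$ for negative integers $n$. The $q$-binomial coefficient in base $\tilde q$ is ${A \brack B}_{\tilde q}=\frac{(\tilde q;\tilde q)_A}{(\tilde q;\tilde q)_B(\tilde q;\tilde q)_{A-B}}$ if $0\le B\le A$ are integers, and $0$ otherwise. $\left(\frac{j}{3}\right)$ is the Legendre symbol modulo 3: it equals $1$ if $j\equiv 1 \pmod 3$, $-1$ if $j\equiv -1\pmod 3$, and $0$ if $3\mid j$. *)

theory Defs
  imports "HOL-Analysis.Analysis" "HOL-Number_Theory.Number_Theory"
begin

definition qpoch :: "complex \<Rightarrow> complex \<Rightarrow> nat \<Rightarrow> complex" where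
  "qpoch a q n = (\<Prod>k<n. 1 - a * q ^ k)"

definition qfac :: "complex \<Rightarrow> nat \<Rightarrow> complex" where
  "qfac qt n = qpoch qt qt n"

definition inv_qfac :: "complex \<Rightarrow> int \<Rightarrow> complex" where
  "inv_qfac qt n = (if n < 0 then 0 else 1 / qfac qt (nat n))"

definition qbinom :: "complex \<Rightarrow> int \<Rightarrow> int \<Rightarrow> complex" where
  "qbinom qt A B = (if 0 \<le> B \<and> B \<le> A
      then qfac qt (nat A) / (qfac qt (nat B) * qfac qt (nat (A - B))) else 0)"

end

theory Submission
  imports Defs
begin


lemma qfac_0[simp]: "qfac p 0 = 1" by (simp add: qfac_def qpoch_def)
lemma qfac_Suc: "qfac p (Suc n) = qfac p n * (1 - p ^ Suc n)"
  by (simp add: qfac_def qpoch_def)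

fun gb :: "complex \<Rightarrow> nat \<Rightarrow> nat \<Rightarrow> complex" where
  "gb p 0 k = (if k = 0 then 1 else 0)"
| "gb p (Suc n) 0 = 1"
| "gb p (Suc n) (Suc k) = gb p n k + p ^ Suc k * gb p n (Suc k)"

lemma gb_0[simp]: "gb p n 0 = 1" by (cases n) auto

lemma gb_gt: "k > n \<Longrightarrow> gb p n k = 0"
proof (induction n arbitrary: k)
  case 0 then show ?case by simp
next
  case (Suc n) then obtain k' where "k = Suc k'" by (cases k) auto
  with Suc show ?case by simp
qed

lemma gb_eq: "k \<le> n \<Longrightarrow> gb p n k * qfac p k * qfac p (n - k) = qfac p n"
proof (induction n arbitrary: k)
  case 0 then show ?case by simp
next
  case (Suc n)
  show ?case
  proof (cases k)
    case 0 then show ?thesis by simp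
  next
    case (Suc k')
    have A: "gb p n k' * qfac p k' * qfac p (n - k') = qfac p n" using Suc.IH Suc Suc.prems by simp
    show ?thesis
    proof (cases "k' = n")
      case True
      have "gb p (Suc n) k * qfac p k * qfac p (Suc n - k) = (gb p n k' * qfac p k' * qfac p (n - k')) * (1 - p^Suc n)"
        using Suc True by (simp add: gb_gt qfac_Suc)
      also have "\<dots> = qfac p (Suc n)" unfolding A by (simp add: qfac_Suc)
      finally show ?thesis .
    next
      case False
      then have kn: "Suc k' \<le> n" using Suc Suc.prems by simp
      have B: "gb p n (Suc k') * qfac p (Suc k') * qfac p (n - Suc k') = qfac p n" using Suc.IH kn by blast
      have e: "n - k' = Suc (n - Suc k')" using kn by simp
      have "gb p (Suc n) k * qfac p k * qfac p (Suc n - k)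
          = (gb p n k' + p ^ Suc k' * gb p n (Suc k')) * (qfac p k' * (1 - p ^ Suc k')) * qfac p (n - k')"
        using Suc by (simp add: qfac_Suc)
      also have "\<dots> = (gb p n k' * qfac p k' * qfac p (n - k')) * (1 - p ^ Suc k')
           + p ^ Suc k' * (gb p n (Suc k') * qfac p (Suc k') * qfac p (n - Suc k')) * (1 - p ^ (n - k'))"
        unfolding e by (simp add: qfac_Suc algebra_simps)
      also have "\<dots> = qfac p n * ((1 - p ^ Suc k') + p ^ Suc k' * (1 - p ^ (n - k')))"
        using A B by (simp add: algebra_simps)
      also have "(1 - p ^ Suc k') + p ^ Suc k' * (1 - p ^ (n - k')) = 1 - p ^ Suc n"
      proof -
        have "Suc k' + (n - k') = Suc n" using kn by simp
        then have "p ^ Suc k' * p ^ (n - k') = p ^ Suc n" by (metis power_add)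
        then show ?thesis by (simp only: algebra_simps) simp
      qed
      finally show ?thesis by (simp add: qfac_Suc)
    qed
  qed
qed

lemma pascal_sum:
  "(\<Sum>k\<le>Suc n. gb p (Suc n) k * t k) = (\<Sum>k\<le>n. gb p n k * (t (Suc k) + p ^ k * t k))"
proof -
  have "(\<Sum>k\<le>Suc n. gb p (Suc n) k * t k) = t 0 + (\<Sum>k\<le>n. gb p (Suc n) (Suc k) * t (Suc k))"
    by (subst sum.atMost_Suc_shift) simp
  also have "\<dots> = t 0 + (\<Sum>k\<le>n. gb p n k * t (Suc k)) + (\<Sum>k\<le>n. p ^ Suc k * gb p n (Suc k) * t (Suc k))"
    by (simp add: algebra_simps sum.distrib)
  also have "(\<Sum>k\<le>n. p ^ Suc k * gb p n (Suc k) * t (Suc k)) = (\<Sum>k\<le>Suc n. p ^ k * gb p n k * t k) - t 0"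
  proof -
    have "(\<Sum>k\<le>Suc n. p ^ k * gb p n k * t k) = p^0 * gb p n 0 * t 0 + (\<Sum>k\<le>n. p ^ Suc k * gb p n (Suc k) * t (Suc k))"
      by (rule sum.atMost_Suc_shift)
    then show ?thesis by simp
  qed
  also have "(\<Sum>k\<le>Suc n. p ^ k * gb p n k * t k) = (\<Sum>k\<le>n. p ^ k * gb p n k * t k)"
    by (simp add: gb_gt)
  finally show ?thesis by (simp add: algebra_simps sum.distrib)
qed

lemma qfac_nz: "norm p < 1 \<Longrightarrow> qfac p n \<noteq> 0"
proof (induction n)
  case 0 then show ?case by simp
next
  case (Suc n)
  have "norm p ^ Suc n < 1" using Suc.prems power_less_one_iff[of "norm p" "Suc n"] by simp
  then have "norm (p ^ Suc n) < 1" by (simp only: norm_power)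
  then have "p ^ Suc n \<noteq> 1" by auto
  then show ?case using Suc by (simp add: qfac_Suc)
qed

lemma U_lemma:
  assumes nz: "\<And>n. qfac p n \<noteq> 0"
  shows "(\<Sum>k\<le>m. gb p m k * p ^ (k*k + A*k) / qfac p (A + k)) = 1 / qfac p (m + A)"
proof (induction m arbitrary: A)
  case 0 then show ?case by simp
next
  case (Suc m)
  have "(\<Sum>k\<le>Suc m. gb p (Suc m) k * (p ^ (k*k + A*k) / qfac p (A + k)))
     = (\<Sum>k\<le>m. gb p m k * (p ^ (Suc k*Suc k + A*Suc k) / qfac p (A + Suc k) + p ^ k * (p ^ (k*k + A*k) / qfac p (A + k))))"
    by (rule pascal_sum)
  also have "\<dots> = (\<Sum>k\<le>m. gb p m k * (p ^ (k*k + Suc A*k) / qfac p (Suc A + k)))"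
  proof (rule sum.cong[OF refl])
    fix k
    define Z where "Z = p ^ (k*k + Suc A*k)"
    define P where "P = p ^ Suc (A + k)"
    define a where "a = qfac p (A + k)"
    have e1: "p ^ (Suc k*Suc k + A*Suc k) = Z * P"
      unfolding Z_def P_def by (simp add: power_add[symmetric] algebra_simps)
    have e2: "p ^ k * p ^ (k*k + A*k) = Z"
      unfolding Z_def by (simp add: power_add[symmetric] algebra_simps)
    have e3: "qfac p (A + Suc k) = a * (1 - P)" "qfac p (Suc A + k) = a * (1 - P)"
      unfolding a_def P_def by (simp_all add: qfac_Suc)
    have an: "a \<noteq> 0" unfolding a_def by (rule nz)
    have bn: "1 - P \<noteq> 0" using nz[of "Suc (A+k)"] unfolding P_def by (simp add: qfac_Suc)
    have "p ^ (Suc k*Suc k + A*Suc k) / qfac p (A + Suc k) + p ^ k * (p ^ (k*k + A*k) / qfac p (A + k))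
        = Z * P / (a * (1 - P)) + Z / a"
      unfolding e1 e3 times_divide_eq_right e2 a_def ..
    also have "\<dots> = Z / (a * (1 - P))" using an bn by (simp add: field_simps)
    finally show "gb p m k * (p ^ (Suc k*Suc k + A*Suc k) / qfac p (A + Suc k) + p ^ k * (p ^ (k*k + A*k) / qfac p (A + k)))
       = gb p m k * (p ^ (k*k + Suc A*k) / qfac p (Suc A + k))"
      unfolding e3 Z_def by simp
  qed
  also have "\<dots> = 1 / qfac p (m + Suc A)" using Suc.IH[of "Suc A"] by simp
  finally show ?case by simp
qed



lemma inv_nat[simp]: "inv_qfac p (int n) = 1 / qfac p n" by (simp add: inv_qfac_def)
lemma inv_neg: "n < 0 \<Longrightarrow> inv_qfac p n = 0" by (simp add: inv_qfac_def)

lemma gb_div: assumes nz: "\<And>n. qfac p n \<noteq> 0" and "k \<le> m"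
  shows "gb p m k = qfac p m / (qfac p k * qfac p (m - k))"
  using gb_eq[OF assms(2), of p] nz[of k] nz[of "m-k"] by (simp add: field_simps)

lemma U2: assumes nz: "\<And>n. qfac p n \<noteq> 0"
  shows "(\<Sum>k\<le>m. p ^ (k*k + A*k) / (qfac p (m - k) * qfac p k * qfac p (A + k)))
       = 1 / (qfac p m * qfac p (m + A))"
proof -
  have "(\<Sum>k\<le>m. p ^ (k*k + A*k) / (qfac p (m - k) * qfac p k * qfac p (A + k)))
      = (\<Sum>k\<le>m. (1 / qfac p m) * (gb p m k * p ^ (k*k + A*k) / qfac p (A + k)))"
  proof (rule sum.cong[OF refl])
    fix k assume "k \<in> {..m}"
    then have "gb p m k = qfac p m / (qfac p k * qfac p (m - k))" using gb_div[OF nz] by simp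
    then show "p ^ (k*k + A*k) / (qfac p (m - k) * qfac p k * qfac p (A + k))
      = (1 / qfac p m) * (gb p m k * p ^ (k*k + A*k) / qfac p (A + k))"
      using nz[of m] by (simp add: field_simps)
  qed
  also have "\<dots> = (1 / qfac p m) * (1 / qfac p (m + A))"
    by (simp only: sum_distrib_left[symmetric] U_lemma[OF nz])
  finally show ?thesis by simp
qed

lemma key_nat:
  assumes nz: "\<And>n. qfac p n \<noteq> 0"
  shows "(\<Sum>K\<le>L. p ^ (K*(K+1)) * inv_qfac p (int L - int K) * inv_qfac p (int K - int r)
            * inv_qfac p (int K + int r + 1))
       = p ^ (r*(r+1)) * inv_qfac p (int L - int r) * inv_qfac p (int L + int r + 1)"
proof (cases "r \<le> L")
  case False
  then show ?thesis by (auto intro!: sum.neutral simp: inv_neg)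
next
  case True
  define f where "f K = p ^ (K*(K+1)) * inv_qfac p (int L - int K) * inv_qfac p (int K - int r)
            * inv_qfac p (int K + int r + 1)" for K
  define m where "m = L - r"
  have "(\<Sum>K\<le>L. f K) = (\<Sum>K\<in>{r..L}. f K)"
    by (rule sum.mono_neutral_right) (auto simp: f_def inv_neg)
  also have "\<dots> = (\<Sum>k\<le>m. f (k + r))"
  proof -
    have "{r..L} = (\<lambda>k. k + r) ` {..m}" unfolding m_def using True
      apply (auto simp: image_iff)
      subgoal for x by (rule bexI[of _ "x - r"]) auto
      done
    then show ?thesis by (simp add: sum.reindex inj_on_def)
  qed
  also have "\<dots> = (\<Sum>k\<le>m. p ^ (r*(r+1)) * (p ^ (k*k + (2*r+1)*k) / (qfac p (m - k) * qfac p k * qfac p (2*r+1 + k))))"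
  proof (rule sum.cong[OF refl])
    fix k assume "k \<in> {..m}"
    then have km: "k \<le> m" by simp
    have i1: "int L - int (k + r) = int (m - k)" using km True unfolding m_def by simp
    have i2: "int (k + r) - int r = int k" by simp
    have i3: "int (k + r) + int r + 1 = int (2*r+1+k)" by simp
    have "(k + r) * (k + r + 1) = r*(r+1) + (k*k + (2*r+1)*k)" by (simp add: algebra_simps mult_2)
    then have pe: "p ^ ((k + r) * (k + r + 1)) = p ^ (r*(r+1)) * p ^ (k*k + (2*r+1)*k)"
      by (simp only: power_add)
    show "f (k + r) = p ^ (r*(r+1)) * (p ^ (k*k + (2*r+1)*k) / (qfac p (m - k) * qfac p k * qfac p (2*r+1 + k)))"
      unfolding f_def i1 i2 i3 inv_nat pe by simp
  qed
  also have "\<dots> = p ^ (r*(r+1)) * (1 / (qfac p m * qfac p (m + (2*r+1))))"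
    by (simp only: sum_distrib_left[symmetric] U2[OF nz])
  also have "\<dots> = p ^ (r*(r+1)) * inv_qfac p (int L - int r) * inv_qfac p (int L + int r + 1)"
  proof -
    have e: "int L - int r = int m" "int L + int r + 1 = int (m + (2*r+1))" using True unfolding m_def by auto
    show ?thesis unfolding e inv_nat by simp
  qed
  finally show ?thesis unfolding f_def .
qed

lemma key_int:
  assumes nz: "\<And>n. qfac p n \<noteq> 0"
  shows "(\<Sum>K\<le>L. p ^ (K*(K+1)) * inv_qfac p (int L - int K) * inv_qfac p (int K - j)
            * inv_qfac p (int K + j + 1))
       = p ^ nat (j*(j+1)) * inv_qfac p (int L - j) * inv_qfac p (int L + j + 1)"
proof (cases "j \<ge> 0")
  case True
  define r where "r = nat j"
  have r: "j = int r" using True unfolding r_def by simp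
  have "j*(j+1) = int (r*(r+1))" unfolding r by (simp add: ring_distribs)
  then have e: "nat (j*(j+1)) = r*(r+1)" by (simp only: nat_int)
  show ?thesis using key_nat[OF nz, of L r] unfolding e unfolding r .
next
  case False
  define r where "r = nat (- j - 1)"
  have r: "j = - int r - 1" using False unfolding r_def by simp
  have "j*(j+1) = int (r*(r+1))" unfolding r by (simp add: ring_distribs)
  then have e: "nat (j*(j+1)) = r*(r+1)" by (simp only: nat_int)
  have e1: "\<And>K::int. K - j = K + int r + 1" unfolding r by auto
  have e2: "\<And>K::int. K + j + 1 = K - int r" unfolding r by auto
  have sw: "\<And>a b c d :: complex. a * b * c * d = a * b * d * c" by simp
  have "(\<Sum>K\<le>L. p ^ (K*(K+1)) * inv_qfac p (int L - int K) * inv_qfac p (int K + int r + 1)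
            * inv_qfac p (int K - int r))
     = (\<Sum>K\<le>L. p ^ (K*(K+1)) * inv_qfac p (int L - int K) * inv_qfac p (int K - int r)
            * inv_qfac p (int K + int r + 1))" by (simp only: sw)
  also have "\<dots> = p ^ (r*(r+1)) * inv_qfac p (int L - int r) * inv_qfac p (int L + int r + 1)"
    by (rule key_nat[OF nz])
  also have "\<dots> = p ^ (r*(r+1)) * inv_qfac p (int L + int r + 1) * inv_qfac p (int L - int r)"
    by (simp only: mult.assoc mult.commute[of "inv_qfac p (int L - int r)"])
  finally show ?thesis unfolding e e1 e2 .
qed



lemma bailey:
  assumes nz: "\<And>n. qfac p n \<noteq> 0"
    and hyp: "\<And>K. K \<le> L \<Longrightarrow> \<beta> K = (\<Sum>j\<in>{-int L-1..int L}. c j * inv_qfac p (int K - j) * inv_qfac p (int K + j + 1))"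
  shows "(\<Sum>K\<le>L. p^(K*(K+1)) * inv_qfac p (int L - int K) * \<beta> K)
       = (\<Sum>j\<in>{-int L-1..int L}. p ^ nat (j*(j+1)) * c j * inv_qfac p (int L - j) * inv_qfac p (int L + j + 1))"
proof -
  have "(\<Sum>K\<le>L. p^(K*(K+1)) * inv_qfac p (int L - int K) * \<beta> K)
      = (\<Sum>K\<le>L. \<Sum>j\<in>{-int L-1..int L}. c j * (p^(K*(K+1)) * inv_qfac p (int L - int K) * inv_qfac p (int K - j) * inv_qfac p (int K + j + 1)))"
    by (rule sum.cong[OF refl]) (simp add: hyp sum_distrib_left mult_ac)
  also have "\<dots> = (\<Sum>j\<in>{-int L-1..int L}. c j * (\<Sum>K\<le>L. p^(K*(K+1)) * inv_qfac p (int L - int K) * inv_qfac p (int K - j) * inv_qfac p (int K + j + 1)))"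
    by (simp add: sum.swap[of _ "{..L}"] sum_distrib_left)
  also have "\<dots> = (\<Sum>j\<in>{-int L-1..int L}. c j * (p ^ nat (j*(j+1)) * inv_qfac p (int L - j) * inv_qfac p (int L + j + 1)))"
    by (simp only: key_int[OF nz])
  finally show ?thesis by (simp add: mult_ac)
qed

lemma ext_J:
  assumes "K \<le> L"
  shows "(\<Sum>j\<in>{-int K-1..int K}. f j * inv_qfac p (int K - j) * inv_qfac p (int K + j + 1))
       = (\<Sum>j\<in>{-int L-1..int L}. f j * inv_qfac p (int K - j) * inv_qfac p (int K + j + 1))"
  using assms by (intro sum.mono_neutral_left) (auto simp: inv_neg)

definition ratio :: "complex \<Rightarrow> nat \<Rightarrow> complex" where
  "ratio q n = qpoch (q ^ 3) (q ^ 6) n / qpoch q (q ^ 2) n"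

definition Tm :: "complex \<Rightarrow> nat list \<Rightarrow> complex" where
  "Tm q ns = (let v = length ns; qt = q ^ 2; N = (\<lambda>i. \<Sum>k=i..<v. ns ! k) in
            qt ^ (\<Sum>i<v. N i * (N i + 1))
            / ((\<Prod>i<v - 1. qfac qt (ns ! i)) * qfac qt (2 * ns ! (v - 1) + 1))
            * (qpoch (q ^ 3) (q ^ 6) (ns ! (v - 1)) / qpoch q (q ^ 2) (ns ! (v - 1))))"

lemma Tm_single: "Tm q [n] = (q^2) ^ (n*(n+1)) / qfac (q^2) (2*n+1) * ratio q n"
  by (simp add: Tm_def ratio_def Let_def)

lemma Tm_cons:
  assumes "length rest \<ge> 1"
  shows "Tm q (x # rest) = (q^2) ^ ((x + sum_list rest) * (x + sum_list rest + 1)) / qfac (q^2) x * Tm q rest"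
proof -
  define v where "v = length rest"
  have v1: "v = Suc (v - 1)" using assms unfolding v_def by simp
  define N where "N = (\<lambda>i. \<Sum>k=i..<Suc v. (x#rest) ! k)"
  define N' where "N' = (\<lambda>i. \<Sum>k=i..<v. rest ! k)"
  have N0: "N 0 = x + sum_list rest"
  proof -
    have "N 0 = sum_list (x#rest)" unfolding N_def v_def by (simp only: sum_list_sum_nth length_Cons)
    then show ?thesis by simp
  qed
  have NS: "N (Suc i) = N' i" for i
    unfolding N_def N'_def by (simp only: sum.shift_bounds_Suc_ivl nth_Cons_Suc)
  have S: "(\<Sum>i<Suc v. N i * (N i + 1)) = (x + sum_list rest) * (x + sum_list rest + 1) + (\<Sum>i<v. N' i * (N' i + 1))"
    by (simp only: sum.lessThan_Suc_shift NS N0)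
  have P: "(\<Prod>i<v. qfac (q^2) ((x#rest) ! i)) = qfac (q^2) x * (\<Prod>i<v-1. qfac (q^2) (rest ! i))"
    by (subst v1, subst prod.lessThan_Suc_shift) simp
  have l: "(x#rest) ! v = rest ! (v - 1)" by (subst v1) simp
  have "Tm q (x # rest) = (q^2) ^ (\<Sum>i<Suc v. N i * (N i + 1))
            / ((\<Prod>i<v. qfac (q^2) ((x#rest) ! i)) * qfac (q^2) (2 * (x#rest) ! v + 1))
            * (qpoch (q ^ 3) (q ^ 6) ((x#rest) ! v) / qpoch q (q ^ 2) ((x#rest) ! v))"
    unfolding Tm_def N_def v_def by (simp add: Let_def)
  also have "\<dots> = (q^2) ^ ((x + sum_list rest) * (x + sum_list rest + 1)) / qfac (q^2) x *
     ((q^2) ^ (\<Sum>i<v. N' i * (N' i + 1))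
            / ((\<Prod>i<v-1. qfac (q^2) (rest ! i)) * qfac (q^2) (2 * rest ! (v-1) + 1))
            * (qpoch (q ^ 3) (q ^ 6) (rest ! (v-1)) / qpoch q (q ^ 2) (rest ! (v-1))))"
    unfolding S P l power_add by (simp add: mult_ac)
  also have "\<dots> = (q^2) ^ ((x + sum_list rest) * (x + sum_list rest + 1)) / qfac (q^2) x * Tm q rest"
    unfolding Tm_def N'_def v_def by (simp add: Let_def)
  finally show ?thesis .
qed



definition cc :: "complex \<Rightarrow> nat \<Rightarrow> int \<Rightarrow> complex" where
  "cc q v j = (-1) ^ nat \<bar>j\<bar> * q powi ((2 * int v + 1) * j ^ 2 + 2 * int v * j) * of_int (Legendre (j + 1) 3)"

lemma jj_nonneg: "0 \<le> (j::int) * (j + 1)"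
proof (cases "j \<ge> 0")
  case True then show ?thesis by simp
next
  case False then have "j \<le> -1" by simp
  then show ?thesis by (intro mult_nonpos_nonpos) auto
qed

lemma powi_nonneg: "0 \<le> e \<Longrightarrow> q powi e = q ^ nat e"
  by (metis nat_0_le power_int_of_nat)

lemma cc_Suc: "cc q (Suc v) j = (q^2) ^ nat (j*(j+1)) * cc q v j"
proof -
  define e where "e = (2 * int v + 1) * j ^ 2 + 2 * int v * j"
  have e2: "e = 2 * int v * (j*(j+1)) + j^2" unfolding e_def by (simp add: algebra_simps power2_eq_square)
  have e0: "0 \<le> e" unfolding e2 using jj_nonneg[of j] by simp
  have e': "(2 * int (Suc v) + 1) * j ^ 2 + 2 * int (Suc v) * j = e + 2 * (j*(j+1))"
    unfolding e_def by (simp add: algebra_simps power2_eq_square)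
  have n: "nat (e + 2 * (j*(j+1))) = nat e + 2 * nat (j*(j+1))" using e0 jj_nonneg[of j] by simp
  have "q powi (e + 2 * (j*(j+1))) = q powi e * (q^2) ^ nat (j*(j+1))"
    using e0 jj_nonneg[of j] by (simp add: powi_nonneg n power_add power_mult)
  then show ?thesis unfolding cc_def e' e_def[symmetric] by (simp add: mult_ac)
qed

lemma R_lemma:
  "(\<Sum>x\<in>{0..L}. p^((x+S)*(x+S+1)) / qfac p x * inv_qfac p (int L - int (x+S)))
   = (\<Sum>K\<le>L. p^(K*(K+1)) * inv_qfac p (int L - int K) * inv_qfac p (int K - int S))"
proof (cases "S \<le> L")
  case False
  then show ?thesis by (simp add: inv_neg)
next
  case True
  define f where "f K = p^(K*(K+1)) * inv_qfac p (int L - int K) * inv_qfac p (int K - int S)" for K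
  have "(\<Sum>K\<le>L. f K) = (\<Sum>K\<in>{S..L}. f K)"
    by (rule sum.mono_neutral_right) (auto simp: f_def inv_neg)
  also have "\<dots> = (\<Sum>x\<in>{0..L-S}. f (x + S))"
  proof -
    have im: "{S..L} = (\<lambda>k. k + S) ` {0..L-S}" using True
      by (auto simp: image_iff)
    show ?thesis unfolding im by (subst sum.reindex) (auto simp: inj_on_def)
  qed
  also have "\<dots> = (\<Sum>x\<in>{0..L}. f (x + S))"
    by (rule sum.mono_neutral_left) (auto simp: f_def inv_neg)
  also have "\<dots> = (\<Sum>x\<in>{0..L}. p^((x+S)*(x+S+1)) / qfac p x * inv_qfac p (int L - int (x+S)))"
  proof (rule sum.cong[OF refl])
    fix x
    have "int (x + S) - int S = int x" by simp
    then show "f (x + S) = p^((x+S)*(x+S+1)) / qfac p x * inv_qfac p (int L - int (x+S))"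
      unfolding f_def by (simp add: mult_ac)
  qed
  finally show ?thesis unfolding f_def by simp
qed

definition Lists :: "nat \<Rightarrow> nat \<Rightarrow> nat list set" where
  "Lists v L = {ns. set ns \<subseteq> {0..L} \<and> length ns = v}"

lemma finite_Lists: "finite (Lists v L)"
  unfolding Lists_def by (rule finite_lists_length_eq) simp

lemma sum_Lists_Suc:
  "(\<Sum>ns\<in>Lists (Suc v) L. F ns) = (\<Sum>rest\<in>Lists v L. \<Sum>x\<in>{0..L}. F (x # rest))"
proof -
  have "(\<Sum>ns\<in>Lists (Suc v) L. F ns) = (\<Sum>ns\<in>(\<lambda>(xs, n). n#xs) ` (Lists v L \<times> {0..L}). F ns)"
    unfolding Lists_def by (simp only: lists_length_Suc_eq)
  also have "\<dots> = (\<Sum>(xs,n)\<in>Lists v L \<times> {0..L}. F (n # xs))"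
    by (subst sum.reindex) (auto simp: inj_on_def intro!: sum.cong split: prod.splits)
  also have "\<dots> = (\<Sum>rest\<in>Lists v L. \<Sum>x\<in>{0..L}. F (x # rest))"
    by (simp add: sum.cartesian_product)
  finally show ?thesis .
qed

lemma Lists_0: "Lists 0 L = {[]}" unfolding Lists_def by auto

lemma claim:
  assumes nz: "\<And>n. qfac (q^2) n \<noteq> 0"
    and seed: "\<And>K. ratio q K / qfac (q^2) (2*K+1)
       = (\<Sum>j\<in>{-int K-1..int K}. cc q 0 j * inv_qfac (q^2) (int K - j) * inv_qfac (q^2) (int K + j + 1))"
    and v: "v \<ge> 1"
  shows "(\<Sum>ns\<in>Lists v L. Tm q ns * inv_qfac (q^2) (int L - int (sum_list ns)))
       = (\<Sum>j\<in>{-int L-1..int L}. cc q v j * inv_qfac (q^2) (int L - j) * inv_qfac (q^2) (int L + j + 1))"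
  using v
proof (induction v arbitrary: L rule: nat_induct_at_least)
  case base
  have "(\<Sum>ns\<in>Lists 1 L. Tm q ns * inv_qfac (q^2) (int L - int (sum_list ns)))
      = (\<Sum>x\<in>{0..L}. Tm q [x] * inv_qfac (q^2) (int L - int x))"
    using sum_Lists_Suc[of "\<lambda>ns. Tm q ns * inv_qfac (q^2) (int L - int (sum_list ns))" 0 L] by (simp add: Lists_0)
  also have "\<dots> = (\<Sum>K\<le>L. (q^2)^(K*(K+1)) * inv_qfac (q^2) (int L - int K) * (ratio q K / qfac (q^2) (2*K+1)))"
    by (simp add: Tm_single atLeast0AtMost mult_ac)
  also have "\<dots> = (\<Sum>j\<in>{-int L-1..int L}. (q^2) ^ nat (j*(j+1)) * cc q 0 j * inv_qfac (q^2) (int L - j) * inv_qfac (q^2) (int L + j + 1))"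
    by (rule bailey[OF nz], simp only: seed, erule ext_J)
  also have "\<dots> = (\<Sum>j\<in>{-int L-1..int L}. cc q 1 j * inv_qfac (q^2) (int L - j) * inv_qfac (q^2) (int L + j + 1))"
    using cc_Suc[of q 0] by simp
  finally show ?case .
next
  case (Suc v)
  define \<beta> where "\<beta> K = (\<Sum>rest\<in>Lists v L. Tm q rest * inv_qfac (q^2) (int K - int (sum_list rest)))" for K
  have "(\<Sum>ns\<in>Lists (Suc v) L. Tm q ns * inv_qfac (q^2) (int L - int (sum_list ns)))
      = (\<Sum>rest\<in>Lists v L. \<Sum>x\<in>{0..L}. Tm q (x # rest) * inv_qfac (q^2) (int L - int (sum_list (x # rest))))"
    by (rule sum_Lists_Suc)
  also have "\<dots> = (\<Sum>rest\<in>Lists v L. Tm q rest * (\<Sum>x\<in>{0..L}. (q^2)^((x + sum_list rest)*(x + sum_list rest+1)) / qfac (q^2) x * inv_qfac (q^2) (int L - int (x + sum_list rest))))"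
  proof (rule sum.cong[OF refl])
    fix rest assume "rest \<in> Lists v L"
    then have "length rest \<ge> 1" using Suc.hyps unfolding Lists_def by simp
    then show "(\<Sum>x\<in>{0..L}. Tm q (x # rest) * inv_qfac (q^2) (int L - int (sum_list (x # rest))))
      = Tm q rest * (\<Sum>x\<in>{0..L}. (q^2)^((x + sum_list rest)*(x + sum_list rest+1)) / qfac (q^2) x * inv_qfac (q^2) (int L - int (x + sum_list rest)))"
      by (simp add: Tm_cons sum_distrib_left mult_ac)
  qed
  also have "\<dots> = (\<Sum>rest\<in>Lists v L. Tm q rest * (\<Sum>K\<le>L. (q^2)^(K*(K+1)) * inv_qfac (q^2) (int L - int K) * inv_qfac (q^2) (int K - int (sum_list rest))))"
    by (simp only: R_lemma)
  also have "\<dots> = (\<Sum>K\<le>L. (q^2)^(K*(K+1)) * inv_qfac (q^2) (int L - int K) * \<beta> K)"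
    unfolding \<beta>_def by (simp add: sum_distrib_left sum.swap[of _ "Lists v L"] mult_ac)
  also have "\<dots> = (\<Sum>j\<in>{-int L-1..int L}. (q^2) ^ nat (j*(j+1)) * cc q v j * inv_qfac (q^2) (int L - j) * inv_qfac (q^2) (int L + j + 1))"
  proof (rule bailey[OF nz])
    fix K assume KL: "K \<le> L"
    have "(\<Sum>rest\<in>Lists v K. Tm q rest * inv_qfac (q^2) (int K - int (sum_list rest))) = \<beta> K"
      unfolding \<beta>_def
    proof (rule sum.mono_neutral_left)
      show "finite (Lists v L)" by (rule finite_Lists)
      show "Lists v K \<subseteq> Lists v L" using KL unfolding Lists_def by auto
      show "\<forall>i\<in>Lists v L - Lists v K. Tm q i * inv_qfac (q\<^sup>2) (int K - int (sum_list i)) = 0"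
      proof
        fix ns assume "ns \<in> Lists v L - Lists v K"
        then obtain y where "y \<in> set ns" "y > K" unfolding Lists_def by (auto simp: subset_iff not_le)
        then have "sum_list ns > K" using member_le_sum_list[of y ns] by simp
        then show "Tm q ns * inv_qfac (q\<^sup>2) (int K - int (sum_list ns)) = 0" by (simp add: inv_neg)
      qed
    qed
    then have "\<beta> K = (\<Sum>rest\<in>Lists v K. Tm q rest * inv_qfac (q^2) (int K - int (sum_list rest)))" ..
    also have "\<dots> = (\<Sum>j\<in>{-int K-1..int K}. cc q v j * inv_qfac (q^2) (int K - j) * inv_qfac (q^2) (int K + j + 1))"
      by (rule Suc.IH)
    also have "\<dots> = (\<Sum>j\<in>{-int L-1..int L}. cc q v j * inv_qfac (q^2) (int K - j) * inv_qfac (q^2) (int K + j + 1))"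
      by (rule ext_J[OF KL])
    finally show "\<beta> K = \<dots>" .
  qed
  also have "\<dots> = (\<Sum>j\<in>{-int L-1..int L}. cc q (Suc v) j * inv_qfac (q^2) (int L - j) * inv_qfac (q^2) (int L + j + 1))"
    by (simp add: cc_Suc)
  finally show ?case .
qed



lemma qbin:
  "(\<Prod>i<n. 1 + z * q ^ (2*i)) = (\<Sum>k\<le>n. gb (q^2) n k * (q ^ (k*(k-1)) * z ^ k))"
proof (induction n arbitrary: z)
  case 0 then show ?case by simp
next
  case (Suc n)
  have ex: "k*(k-1) + 2*k = k*(k+1)" for k :: nat by (cases k) (simp_all add: algebra_simps)
  have "(\<Prod>i<Suc n. 1 + z * q ^ (2*i)) = (1 + z) * (\<Prod>i<n. 1 + (z * q^2) * q ^ (2*i))"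
  proof -
    have A: "(\<Prod>i<Suc n. 1 + z * q ^ (2*i)) = (1 + z * q^(2*0)) * (\<Prod>i<n. 1 + z * q ^ (2*Suc i))"
      by (rule prod.lessThan_Suc_shift)
    have B: "1 + z * q ^ (2*Suc i) = 1 + (z * q^2) * q^(2*i)" for i
    proof -
      have "q ^ (2*Suc i) = q^2 * q^(2*i)" by (simp add: power_add[symmetric])
      then show ?thesis by (simp only: mult.assoc)
    qed
    show ?thesis unfolding A B by (simp only: mult_zero_right power_0 mult_1_right)
  qed
  also have "\<dots> = (1 + z) * (\<Sum>k\<le>n. gb (q^2) n k * (q ^ (k*(k-1)) * (z * q^2) ^ k))"
    by (simp only: Suc.IH)
  also have "\<dots> = (\<Sum>k\<le>n. gb (q^2) n k * (q ^ (Suc k*(Suc k-1)) * z ^ Suc k + (q^2) ^ k * (q ^ (k*(k-1)) * z ^ k)))"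
    unfolding sum_distrib_left
  proof (rule sum.cong[OF refl])
    fix k
    have q2: "(q^2)^k = q^(2*k)" by (simp only: power_mult)
    have a: "q ^ (k*(k-1)) * (z * q^2) ^ k = q ^ (k*(k+1)) * z ^ k"
    proof -
      have "q ^ (k*(k-1)) * (z * q^2) ^ k = q ^ (k*(k-1)) * q^(2*k) * z ^ k"
        by (simp only: power_mult_distrib q2 mult_ac)
      also have "q ^ (k*(k-1)) * q^(2*k) = q ^ (k*(k+1))" by (simp only: power_add[symmetric] ex)
      finally show ?thesis .
    qed
    have b: "(q^2) ^ k * (q ^ (k*(k-1)) * z ^ k) = q ^ (k*(k+1)) * z ^ k"
    proof -
      have "(q^2) ^ k * (q ^ (k*(k-1)) * z ^ k) = q ^ (k*(k-1)) * q^(2*k) * z ^ k"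
        by (simp only: q2 mult_ac)
      also have "q ^ (k*(k-1)) * q^(2*k) = q ^ (k*(k+1))" by (simp only: power_add[symmetric] ex)
      finally show ?thesis .
    qed
    have c: "q ^ (Suc k*(Suc k-1)) * z ^ Suc k = z * (q ^ (k*(k+1)) * z ^ k)"
      by (simp add: mult_ac)
    show "(1 + z) * (gb (q^2) n k * (q ^ (k*(k-1)) * (z * q^2) ^ k))
        = gb (q^2) n k * (q ^ (Suc k*(Suc k-1)) * z ^ Suc k + (q^2) ^ k * (q ^ (k*(k-1)) * z ^ k))"
      unfolding a b c by (simp add: algebra_simps)
  qed
  also have "\<dots> = (\<Sum>k\<le>Suc n. gb (q^2) (Suc n) k * (q ^ (k*(k-1)) * z ^ k))"
    by (rule pascal_sum[symmetric])
  finally show ?case .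
qed

lemma prod_odd: "(\<Prod>t<K. (x::complex) ^ (2*t+1)) = x ^ (K*K)"
proof (induction K)
  case 0 then show ?case by simp
next
  case (Suc K)
  have "Suc K * Suc K = K*K + (2*K+1)" by simp
  then show ?case using Suc by (simp only: prod.lessThan_Suc power_add)
qed

lemma qy_pow: assumes "q * y = (1::complex)" "b \<le> a" shows "q ^ a * y ^ b = q ^ (a - b)"
proof -
  have "q ^ a = q ^ (a - b) * q ^ b" using assms(2) by (simp add: power_add[symmetric])
  moreover have "q ^ b * y ^ b = 1" by (simp add: power_mult_distrib[symmetric] assms(1))
  ultimately show ?thesis by (simp add: mult.assoc)
qed

definition PP :: "complex \<Rightarrow> nat \<Rightarrow> complex" where
  "PP q K = (\<Prod>i<K. 1 + q ^ (2*i+1) + q ^ (4*i+2))"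

lemma E_w:
  fixes q w w' :: complex
  assumes q0: "q \<noteq> 0" and ww: "w * w' = 1" and ws: "w + w' = -1"
  shows "(\<Sum>k\<le>2*K+1. gb (q^2) (2*K+1) k * ((-w) ^ k * (-w') ^ K * q ^ nat ((int K - int k)^2)))
       = (1 - w * q ^ (2*K+1)) * PP q K"
proof -
  define y where "y = inverse q"
  have qy: "q * y = 1" unfolding y_def using q0 by simp
  define z where "z = - w * q * y ^ (2*K)"
  define C where "C = (-w') ^ K * q ^ (K*K)"
  define g where "g i = 1 + z * q ^ (2*i)" for i
  have Q: "(\<Prod>i<2*K+1. g i) = (\<Sum>k\<le>2*K+1. gb (q^2) (2*K+1) k * (q ^ (k*(k-1)) * z ^ k))"
    unfolding g_def by (rule qbin)
  have R: "(\<Sum>k\<le>2*K+1. gb (q^2) (2*K+1) k * (q ^ (k*(k-1)) * z ^ k)) * C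
      = (\<Sum>k\<le>2*K+1. gb (q^2) (2*K+1) k * ((-w) ^ k * (-w') ^ K * q ^ nat ((int K - int k)^2)))"
    unfolding sum_distrib_right
  proof (rule sum.cong[OF refl])
    fix k
    have le: "2*K*k \<le> k*k + K*K"
    proof -
      have "int (2*K*k) \<le> int (k*k + K*K)"
        using zero_le_power2[of "int K - int k"] by (simp add: power2_eq_square algebra_simps)
      then show ?thesis by linarith
    qed
    have ne: "nat ((int K - int k)^2) = k*k + K*K - 2*K*k"
    proof -
      have "int (k*k + K*K - 2*K*k) = (int K - int k)^2"
        using le by (simp add: of_nat_diff power2_eq_square algebra_simps)
      then show ?thesis by (metis nat_int)
    qed
    have ex: "k*(k-1) + k + K*K = k*k + K*K" by (cases k) simp_all
    have zk: "z ^ k = (-w) ^ k * q ^ k * y ^ (2*K*k)"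
      unfolding z_def by (simp only: power_mult_distrib power_mult)
    have "q ^ (k*(k-1)) * z ^ k * C = (-w) ^ k * (-w') ^ K * ((q ^ (k*(k-1)) * q ^ k * q ^ (K*K)) * y ^ (2*K*k))"
      unfolding zk C_def by (simp only: mult_ac)
    also have "q ^ (k*(k-1)) * q ^ k * q ^ (K*K) = q ^ (k*k + K*K)"
      by (simp only: power_add[symmetric] ex)
    also have "q ^ (k*k + K*K) * y ^ (2*K*k) = q ^ nat ((int K - int k)^2)"
      unfolding ne by (rule qy_pow[OF qy le])
    finally show "gb (q^2) (2*K+1) k * (q ^ (k*(k-1)) * z ^ k) * C
        = gb (q^2) (2*K+1) k * ((-w) ^ k * (-w') ^ K * q ^ nat ((int K - int k)^2))"
      by (simp add: mult_ac)
  qed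
  have split: "(\<Prod>i<2*K+1. g i) = (\<Prod>i<K. g i) * (\<Prod>i<K+1. g (i + K))"
  proof -
    have "(\<Prod>i<2*K+1. g i) = (\<Prod>i\<in>{0..<K}. g i) * (\<Prod>i\<in>{K..<2*K+1}. g i)"
      by (simp add: lessThan_atLeast0 prod.atLeastLessThan_concat)
    also have "(\<Prod>i\<in>{K..<2*K+1}. g i) = (\<Prod>i\<in>{0..<K+1}. g (i + K))"
    proof -
      have "{K..<2*K+1} = {0+K..<(K+1)+K}" by (simp add: mult_2)
      then show ?thesis by (simp only: prod.shift_bounds_nat_ivl)
    qed
    finally show ?thesis by (simp add: lessThan_atLeast0)
  qed
  have upper: "g (i + K) = 1 - w * q ^ (2*i+1)" for i
  proof -
    have "q ^ (2*(i+K)) * y ^ (2*K) = q ^ (2*i)"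
      using qy_pow[OF qy, of "2*K" "2*(i+K)"] by simp
    then show ?thesis unfolding g_def z_def
      by (simp add: mult_ac)
  qed
  have lower: "g i = (-w) * (y ^ (2*(K - Suc i)+1) * (1 - w' * q ^ (2*(K - Suc i)+1)))" if "i < K" for i
  proof -
    define a where "a = 2*(K - Suc i)+1"
    have ka: "2*K = (2*i+1) + a" unfolding a_def using that by simp
    have "q ^ (2*i) * y ^ (2*K) = y * y ^ a"
    proof -
      have "q ^ (2*i) * y ^ (2*K) = (q ^ (2*i) * y ^ (2*i)) * y * y ^ a"
        unfolding ka by (simp add: power_add mult_ac)
      also have "q ^ (2*i) * y ^ (2*i) = 1" by (simp add: power_mult_distrib[symmetric] qy)
      finally show ?thesis by simp
    qed
    then have "g i = 1 - w * y ^ a" unfolding g_def z_def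
      by (simp add: mult_ac) (metis (no_types, lifting) mult.assoc mult.left_commute qy mult_1)
    moreover have "(-w) * (y ^ a * (1 - w' * q ^ a)) = 1 - w * y ^ a"
    proof -
      have "y ^ a * q ^ a = 1" by (simp add: power_mult_distrib[symmetric] qy mult.commute)
      then show ?thesis using ww by (simp add: algebra_simps)
    qed
    ultimately show ?thesis unfolding a_def by simp
  qed
  have lowerP: "(\<Prod>i<K. g i) = (-w) ^ K * (y ^ (K*K) * (\<Prod>t<K. 1 - w' * q ^ (2*t+1)))"
  proof -
    define h where "h t = y ^ (2*t+1) * (1 - w' * q ^ (2*t+1))" for t
    have "(\<Prod>i<K. g i) = (\<Prod>i<K. (-w) * h (K - Suc i))"
      by (rule prod.cong[OF refl]) (simp add: lower h_def)
    also have "\<dots> = (\<Prod>i<K. (-w)) * (\<Prod>i<K. h (K - Suc i))" by (rule prod.distrib)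
    also have "(\<Prod>i<K. (-w)) = (-w) ^ K" by simp
    also have "(\<Prod>i<K. h (K - Suc i)) = (\<Prod>t<K. h t)" by (rule prod.nat_diff_reindex)
    also have "\<dots> = (\<Prod>t<K. y ^ (2*t+1)) * (\<Prod>t<K. 1 - w' * q ^ (2*t+1))"
      unfolding h_def by (rule prod.distrib)
    also have "(\<Prod>t<K. y ^ (2*t+1)) = y ^ (K*K)" by (rule prod_odd)
    finally show ?thesis .
  qed
  have upperP: "(\<Prod>i<K+1. g (i + K)) = (1 - w * q ^ (2*K+1)) * (\<Prod>i<K. 1 - w * q ^ (2*i+1))"
    by (simp add: upper)
  have PPe: "(\<Prod>i<K. 1 - w * q ^ (2*i+1)) * (\<Prod>t<K. 1 - w' * q ^ (2*t+1)) = PP q K"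
    unfolding PP_def prod.distrib[symmetric]
  proof (rule prod.cong[OF refl])
    fix i
    have "(1 - w * q ^ (2*i+1)) * (1 - w' * q ^ (2*i+1)) = 1 - (w + w') * q ^ (2*i+1) + (w * w') * (q ^ (2*i+1))^2"
      by (simp add: algebra_simps power2_eq_square)
    also have "(q ^ (2*i+1))^2 = q ^ (4*i+2)"
    proof -
      have "(2*i+1)*2 = 4*i+2" by simp
      then show ?thesis by (simp only: power_mult[symmetric])
    qed
    finally show "(1 - w * q ^ (2*i+1)) * (1 - w' * q ^ (2*i+1)) = 1 + q ^ (2*i+1) + q ^ (4*i+2)"
      using ww ws by simp
  qed
  have "(\<Prod>i<2*K+1. g i) * C = ((-w) ^ K * (-w') ^ K) * (y ^ (K*K) * q ^ (K*K)) * (1 - w * q ^ (2*K+1))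
          * ((\<Prod>i<K. 1 - w * q ^ (2*i+1)) * (\<Prod>t<K. 1 - w' * q ^ (2*t+1)))"
    unfolding split lowerP upperP C_def by (simp add: mult_ac)
  also have "(-w) ^ K * (-w') ^ K = 1" using ww by (simp add: power_mult_distrib[symmetric])
  also have "y ^ (K*K) * q ^ (K*K) = 1" using qy by (simp add: power_mult_distrib[symmetric] mult.commute)
  finally have L: "(\<Prod>i<2*K+1. g i) * C = (1 - w * q ^ (2*K+1)) * PP q K" unfolding PPe by simp
  show ?thesis using L R Q by simp
qed



definition om :: complex where "om = Complex (-1/2) (sqrt 3 / 2)"

lemma om2: "om^2 = Complex (-1/2) (- sqrt 3 / 2)"
  unfolding om_def by (simp add: complex_eq_iff power2_eq_square)

lemma om3: "om^3 = 1"
proof -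
  have "om^3 = om * om^2" by (simp add: power3_eq_cube power2_eq_square)
  then show ?thesis unfolding om2 unfolding om_def by (simp add: complex_eq_iff)
qed

lemma om_sum: "om + om^2 = -1" unfolding om2 unfolding om_def by (simp add: complex_eq_iff)
lemma om_prod: "om * om^2 = 1" using om3 by (simp add: power3_eq_cube power2_eq_square mult.assoc)
lemma om_diff: "om^2 - om \<noteq> 0" unfolding om2 unfolding om_def by (simp add: complex_eq_iff)

lemma om_mod: "om ^ n = om ^ (n mod 3)"
proof -
  have "om ^ n = (om^3) ^ (n div 3) * om ^ (n mod 3)"
    by (simp add: power_mult[symmetric] power_add[symmetric])
  then show ?thesis by (simp add: om3)
qed

lemma Leg3: "Legendre m 3 = (if m mod 3 = 0 then 0 else if m mod 3 = 1 then 1 else -1)"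
proof -
  have c0: "[m = 0] (mod 3) \<longleftrightarrow> m mod 3 = 0" by (simp add: cong_def)
  have qr: "QuadRes 3 m \<longleftrightarrow> m mod 3 = 1" if "m mod 3 \<noteq> 0"
  proof
    assume "QuadRes 3 m"
    then obtain y where "[y^2 = m] (mod 3)" unfolding QuadRes_def by auto
    then have y: "(y^2) mod 3 = m mod 3" by (simp add: cong_def)
    have "(y^2) mod 3 = ((y mod 3)^2) mod 3" by (simp add: power_mod)
    moreover have "y mod 3 = 0 \<or> y mod 3 = 1 \<or> y mod 3 = 2" by presburger
    ultimately have "(y^2) mod 3 = 0 \<or> (y^2) mod 3 = 1" by (auto simp: power2_eq_square)
    then show "m mod 3 = 1" using y that by auto
  next
    assume "m mod 3 = 1"
    then have "[1^2 = m] (mod 3)" by (simp add: cong_def)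
    then show "QuadRes 3 m" unfolding QuadRes_def by blast
  qed
  show ?thesis
  proof (cases "m mod 3 = 0")
    case True then show ?thesis by (simp add: Legendre_def c0)
  next
    case False
    then have "QuadRes 3 m = (m mod 3 = 1)" by (rule qr)
    then show ?thesis by (simp only: Legendre_def c0 False if_False)
  qed
qed

lemma char:
  "om ^ (k + 2*K + 2) - om ^ (2*k + K + 1) = (om^2 - om) * of_int (Legendre (int K - int k + 1) 3)"
proof -
  define s where "s = k mod 3"
  define t where "t = K mod 3"
  define a where "a = k div 3"
  define b where "b = K div 3"
  have k: "k = s + 3*a" unfolding s_def a_def by simp
  have K: "K = t + 3*b" unfolding t_def b_def by simp
  have e1: "(k + 2*K + 2) mod 3 = (s + 2*t + 2) mod 3"
  proof -
    have "k + 2*K + 2 = (s + 2*t + 2) + 3*(a + 2*b)" unfolding k K by simp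
    then show ?thesis by (simp only: mod_mult_self2)
  qed
  have e2: "(2*k + K + 1) mod 3 = (2 * s + t + 1) mod 3"
  proof -
    have "2*k + K + 1 = (2 * s + t + 1) + 3*(2*a + b)" unfolding k K by simp
    then show ?thesis by (simp only: mod_mult_self2)
  qed
  have e3: "(int K - int k + 1) mod 3 = (int t - int s + 1) mod 3"
  proof -
    have "int K - int k + 1 = (int t - int s + 1) + 3*(int b - int a)" unfolding k K by simp
    then show ?thesis by (simp only: mod_mult_self2)
  qed
  have s3: "s < 3" "t < 3" unfolding s_def t_def by auto
  have "s = 0 \<or> s = 1 \<or> s = 2" "t = 0 \<or> t = 1 \<or> t = 2" using s3 by auto
  then show ?thesis
    apply (subst (1 2) om_mod)
    unfolding e1 e2 Leg3 e3
    by (elim disjE) (simp_all add: power2_eq_square)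
qed

lemma gb_zero: "k \<le> n \<Longrightarrow> gb 0 n k = 1"
proof (induction n arbitrary: k)
  case 0 then show ?case by simp
next
  case (Suc n) then show ?case by (cases k) auto
qed

lemma term_id:
  "Qk * (om^2 * ((-om) ^ k * (- (om^2)) ^ K) - om * ((- (om^2)) ^ k * (-om) ^ K))
        = Qk * ((-1) ^ (k + K) * (om ^ (k + 2*K + 2) - om ^ (2*k + K + 1)))"
proof -
    have a: "(-om) ^ k = (-1)^k * om^k" "(- (om^2)) ^ K = (-1)^K * om^(2*K)" "(- (om^2)) ^ k = (-1)^k * om^(2*k)"
      "(-om) ^ K = (-1)^K * om^K"
      by (simp_all only: power_minus[of om] power_minus[of "om^2"] power_mult)
    have b: "om ^ (k + 2*K + 2) = om^2 * (om^k * om^(2*K))" "om ^ (2*k + K + 1) = om * (om^(2*k) * om^K)"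
      by (simp_all only: power_add power_one_right mult_ac)
    have c: "(-1::complex) ^ (k + K) = (-1)^k * (-1)^K" by (rule power_add)
    have gen3: "\<And>a b c d e f g h i::complex. a*(b*((c*d)*(e*f)) - g*((c*h)*(e*i))) = a*((c*e)*(b*(d*f) - g*(h*i)))"
      by (simp add: algebra_simps)
    show ?thesis
      unfolding a b c by (rule gen3)
qed

lemma S2:
  fixes q :: complex
  shows "PP q K = (\<Sum>k\<le>2*K+1. gb (q^2) (2*K+1) k * ((-1) ^ (k + K) * q ^ nat ((int K - int k)^2)
              * of_int (Legendre (int K - int k + 1) 3)))"
proof (cases "q = 0")
  case True
  have "(\<Sum>k\<le>2*K+1. gb (q^2) (2*K+1) k * ((-1) ^ (k + K) * q ^ nat ((int K - int k)^2)
              * of_int (Legendre (int K - int k + 1) 3)))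
      = (\<Sum>k\<le>2*K+1. if k = K then 1 else 0)"
  proof (rule sum.cong[OF refl])
    fix k assume k: "k \<in> {..2*K+1}"
    show "gb (q^2) (2*K+1) k * ((-1) ^ (k + K) * q ^ nat ((int K - int k)^2)
              * of_int (Legendre (int K - int k + 1) 3)) = (if k = K then 1 else 0)"
    proof (cases "k = K")
      case True
      then show ?thesis using \<open>q = 0\<close> gb_zero[of K "2*K+1"] by (simp add: Leg3 flip: mult_2)
    next
      case False
      then have "nat ((int K - int k)^2) \<noteq> 0" by simp
      then show ?thesis using \<open>q = 0\<close> False by simp
    qed
  qed
  also have "\<dots> = 1" by simp
  finally show ?thesis using True unfolding PP_def by simp
next
  case False
  have w1: "om * om^2 = 1" "om + om^2 = -1" using om_prod om_sum by auto
  have w2: "om^2 * om = 1" "om^2 + om = -1" using om_prod om_sum by (auto simp: mult.commute add.commute)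
  note E1 = E_w[OF False w1, of K]
  note E2 = E_w[OF False w2, of K]
  define Q where "Q k = gb (q^2) (2*K+1) k * q ^ nat ((int K - int k)^2)" for k
  have gen: "\<And>a b X P::complex. (b - a) * P = b * ((1 - a * X) * P) - a * ((1 - b * X) * P)"
    by (simp add: algebra_simps)
  have "(om^2 - om) * PP q K = om^2 * ((1 - om * q ^ (2*K+1)) * PP q K) - om * ((1 - om^2 * q ^ (2*K+1)) * PP q K)"
    by (rule gen)
  also have "\<dots> = (\<Sum>k\<le>2*K+1. Q k * (om^2 * ((-om) ^ k * (- (om^2)) ^ K) - om * ((- (om^2)) ^ k * (-om) ^ K)))"
  proof -
    have gen2: "\<And>a b g x y z::complex. a * (g * (x * z)) - b * (g * (y * z)) = (g * z) * (a * x - b * y)"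
      by (simp add: algebra_simps)
    have "om^2 * ((1 - om * q ^ (2*K+1)) * PP q K) - om * ((1 - om^2 * q ^ (2*K+1)) * PP q K)
      = (\<Sum>k\<le>2*K+1. om^2 * (gb (q^2) (2*K+1) k * ((-om) ^ k * (- (om^2)) ^ K * q ^ nat ((int K - int k)^2))))
      - (\<Sum>k\<le>2*K+1. om * (gb (q^2) (2*K+1) k * ((- (om^2)) ^ k * (-om) ^ K * q ^ nat ((int K - int k)^2))))"
      by (simp only: E1[symmetric] E2[symmetric] sum_distrib_left)
    also have "\<dots> = (\<Sum>k\<le>2*K+1. om^2 * (gb (q^2) (2*K+1) k * ((-om) ^ k * (- (om^2)) ^ K * q ^ nat ((int K - int k)^2)))
       - om * (gb (q^2) (2*K+1) k * ((- (om^2)) ^ k * (-om) ^ K * q ^ nat ((int K - int k)^2))))"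
      by (rule sum_subtractf[symmetric])
    also have "\<dots> = (\<Sum>k\<le>2*K+1. Q k * (om^2 * ((-om) ^ k * (- (om^2)) ^ K) - om * ((- (om^2)) ^ k * (-om) ^ K)))"
      unfolding Q_def by (rule sum.cong[OF refl], rule gen2)
    finally show ?thesis .
  qed
  also have "\<dots> = (\<Sum>k\<le>2*K+1. Q k * ((-1) ^ (k + K) * (om ^ (k + 2*K + 2) - om ^ (2*k + K + 1))))"
    by (rule sum.cong[OF refl], rule term_id)
  also have "\<dots> = (om^2 - om) * (\<Sum>k\<le>2*K+1. gb (q^2) (2*K+1) k * ((-1) ^ (k + K) * q ^ nat ((int K - int k)^2)
              * of_int (Legendre (int K - int k + 1) 3)))"
    unfolding char sum_distrib_left Q_def by (rule sum.cong[OF refl]) (simp add: mult_ac)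
  finally show ?thesis using om_diff by simp
qed



lemma ratio_PP:
  assumes "norm q < 1"
  shows "ratio q K = PP q K"
proof -
  have "ratio q K = (\<Prod>i<K. (1 - q^3 * (q^6)^i) / (1 - q * (q^2)^i))"
    unfolding ratio_def qpoch_def by (rule prod_dividef[symmetric])
  also have "\<dots> = PP q K" unfolding PP_def
  proof (rule prod.cong[OF refl])
    fix i
    define x where "x = q ^ (2*i+1)"
    have x3: "q^3 * (q^6)^i = x^3" unfolding x_def
      by (simp only: power_mult[symmetric] power_add[symmetric]) (simp add: algebra_simps)
    have x1: "q * (q^2)^i = x" unfolding x_def
      by (simp only: power_mult[symmetric] power_Suc[symmetric]) simp
    have x2: "q ^ (4*i+2) = x^2" unfolding x_def
      by (simp only: power_mult[symmetric]) (simp add: algebra_simps)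
    have "norm q ^ (2*i+1) < 1" using assms power_less_one_iff[of "norm q" "2*i+1"] by simp
    then have "norm x < 1" unfolding x_def by (simp only: norm_power)
    then have "x \<noteq> 1" by auto
    then have "(1 - x^3) / (1 - x) = 1 + x + x^2"
      by (simp add: field_simps power2_eq_square power3_eq_cube algebra_simps)
    then show "(1 - q^3 * (q^6)^i) / (1 - q * (q^2)^i) = 1 + q ^ (2*i+1) + q ^ (4*i+2)"
      unfolding x3 x1 x2 by (simp add: x_def)
  qed
  finally show ?thesis .
qed

lemma sign_eq: "(-1::complex) ^ nat \<bar>int K - int k\<bar> = (-1) ^ (k + K)"
proof -
  have "k + K = nat \<bar>int K - int k\<bar> + 2 * min k K" by (simp add: min_def) linarith
  then have "(-1::complex) ^ (k + K) = (-1) ^ nat \<bar>int K - int k\<bar> * ((-1)^2) ^ min k K"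
    by (simp only: power_add power_mult)
  then show ?thesis by simp
qed

lemma seed:
  assumes nq: "norm q < 1"
  shows "ratio q K / qfac (q^2) (2*K+1)
       = (\<Sum>j\<in>{-int K-1..int K}. cc q 0 j * inv_qfac (q^2) (int K - j) * inv_qfac (q^2) (int K + j + 1))"
proof -
  have "norm q ^ 2 < 1" using nq power_less_one_iff[of "norm q" 2] by simp
  then have nq2: "norm (q^2) < 1" by (simp only: norm_power)
  have nz: "\<And>n. qfac (q^2) n \<noteq> 0" using qfac_nz[OF nq2] .
  define f where "f j = cc q 0 j * inv_qfac (q^2) (int K - j) * inv_qfac (q^2) (int K + j + 1)" for j
  have "(\<Sum>j\<in>{-int K-1..int K}. f j) = (\<Sum>k\<le>2*K+1. f (int K - int k))"
    by (rule sum.reindex_bij_witness[where i="\<lambda>k. int K - int k" and j="\<lambda>j. nat (int K - j)"]) auto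
  also have "\<dots> = (\<Sum>k\<le>2*K+1. (1 / qfac (q^2) (2*K+1)) * (gb (q^2) (2*K+1) k * ((-1) ^ (k + K) * q ^ nat ((int K - int k)^2)
              * of_int (Legendre (int K - int k + 1) 3))))"
  proof (rule sum.cong[OF refl])
    fix k assume "k \<in> {..2*K+1}"
    then have k: "k \<le> 2*K+1" by simp
    have i1: "int K - (int K - int k) = int k" by simp
    have i2: "int K + (int K - int k) + 1 = int (2*K+1-k)" using k by simp
    have g: "gb (q^2) (2*K+1) k = qfac (q^2) (2*K+1) / (qfac (q^2) k * qfac (q^2) (2*K+1-k))"
      by (rule gb_div[OF nz k])
    have c: "cc q 0 (int K - int k) = (-1) ^ (k + K) * q ^ nat ((int K - int k)^2) * of_int (Legendre (int K - int k + 1) 3)"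
      unfolding cc_def by (simp add: powi_nonneg sign_eq)
    show "f (int K - int k) = (1 / qfac (q^2) (2*K+1)) * (gb (q^2) (2*K+1) k * ((-1) ^ (k + K) * q ^ nat ((int K - int k)^2)
              * of_int (Legendre (int K - int k + 1) 3)))"
      unfolding f_def i1 i2 inv_nat g c using nz[of "2*K+1"] nz[of k] nz[of "2*K+1-k"]
      by (simp add: field_simps)
  qed
  also have "\<dots> = (1 / qfac (q^2) (2*K+1)) * PP q K"
    by (simp only: sum_distrib_left[symmetric] S2[symmetric])
  also have "\<dots> = ratio q K / qfac (q^2) (2*K+1)" using ratio_PP[OF nq] by simp
  finally show ?thesis unfolding f_def ..
qed



lemma qbinom_inv: "qbinom p (2 * int L + 1) (int L - j) = qfac p (2*L+1) * inv_qfac p (int L - j) * inv_qfac p (int L + j + 1)"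
proof (cases "0 \<le> int L - j \<and> int L - j \<le> 2 * int L + 1")
  case True
  then have a: "int L - j = int (nat (int L - j))" and b: "int L + j + 1 = int (nat (int L + j + 1))"
    and c: "nat (2 * int L + 1 - (int L - j)) = nat (int L + j + 1)" and d: "nat (2 * int L + 1) = 2*L+1" by auto
  show ?thesis unfolding qbinom_def using True
    by (subst a, subst b, simp only: inv_nat c d if_True) simp
next
  case False
  then show ?thesis unfolding qbinom_def by (auto simp: inv_neg)
qed

lemma sum_nth_eq: "length ns = v \<Longrightarrow> (\<Sum>k=0..<v. ns ! k) = sum_list ns"
  by (simp add: sum_list_sum_nth)

theorem mainTheorem15:
  fixes q :: complex and v L :: nat
  assumes "norm q < 1" and "v \<ge> 1"
  shows "(\<Sum>\<^sub>\<infinity> ns \<in> {ns :: nat list. length ns = v}.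
            let qt = q ^ 2; N = (\<lambda>i. \<Sum>k=i..<v. ns ! k) in
            qt ^ (\<Sum>i<v. N i * (N i + 1))
            / ((\<Prod>i<v - 1. qfac qt (ns ! i)) * qfac qt (2 * ns ! (v - 1) + 1))
            * (qpoch (q ^ 3) (q ^ 6) (ns ! (v - 1)) / qpoch q (q ^ 2) (ns ! (v - 1)))
            * (qfac qt (2 * L + 1) * inv_qfac qt (int L - int (N 0))))
       = (\<Sum>\<^sub>\<infinity> j \<in> (UNIV :: int set).
            (-1) ^ nat \<bar>j\<bar> * q powi ((2 * int v + 1) * j ^ 2 + 2 * int v * j)
            * of_int (Legendre (j + 1) 3) * qbinom (q ^ 2) (2 * int L + 1) (int L - j))"
proof -
  have nq: "norm (q^2) < 1" using assms(1)
    by (simp add: norm_power power_less_one_iff)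
  have nz: "\<And>n. qfac (q^2) n \<noteq> 0" using qfac_nz[OF nq] .
  define f where "f ns = (let qt = q ^ 2; N = (\<lambda>i. \<Sum>k=i..<v. ns ! k) in
            qt ^ (\<Sum>i<v. N i * (N i + 1))
            / ((\<Prod>i<v - 1. qfac qt (ns ! i)) * qfac qt (2 * ns ! (v - 1) + 1))
            * (qpoch (q ^ 3) (q ^ 6) (ns ! (v - 1)) / qpoch q (q ^ 2) (ns ! (v - 1)))
            * (qfac qt (2 * L + 1) * inv_qfac qt (int L - int (N 0))))" for ns
  have fT: "f ns = Tm q ns * (qfac (q^2) (2 * L + 1) * inv_qfac (q^2) (int L - int (sum_list ns)))"
    if "length ns = v" for ns
  proof -
    have "(\<Sum>k=0..<v. ns ! k) = sum_list ns" using sum_nth_eq[OF that] .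
    then show ?thesis unfolding f_def Tm_def using that by (simp add: Let_def)
  qed
  have "(\<Sum>\<^sub>\<infinity> ns \<in> {ns :: nat list. length ns = v}. f ns)
      = (\<Sum>\<^sub>\<infinity> ns \<in> Lists v L. Tm q ns * (qfac (q^2) (2 * L + 1) * inv_qfac (q^2) (int L - int (sum_list ns))))"
  proof (rule infsum_cong_neutral)
    fix ns assume "ns \<in> Lists v L - {ns. length ns = v}"
    then show "Tm q ns * (qfac (q^2) (2 * L + 1) * inv_qfac (q^2) (int L - int (sum_list ns))) = 0"
      unfolding Lists_def by auto
  next
    fix ns assume a: "ns \<in> {ns. length ns = v} - Lists v L"
    then obtain y where "y \<in> set ns" "y > L" unfolding Lists_def by (auto simp: subset_iff not_le)
    then have "sum_list ns > L" using member_le_sum_list[of y ns] by simp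
    then show "f ns = 0" using a fT[of ns] by (simp add: inv_neg)
  next
    fix ns assume "ns \<in> {ns. length ns = v} \<inter> Lists v L"
    then show "f ns = Tm q ns * (qfac (q^2) (2 * L + 1) * inv_qfac (q^2) (int L - int (sum_list ns)))"
      using fT by auto
  qed
  also have "\<dots> = qfac (q^2) (2 * L + 1) * (\<Sum>ns\<in>Lists v L. Tm q ns * inv_qfac (q^2) (int L - int (sum_list ns)))"
    by (simp add: finite_Lists sum_distrib_left mult_ac)
  also have "\<dots> = qfac (q^2) (2 * L + 1) * (\<Sum>j\<in>{-int L-1..int L}. cc q v j * inv_qfac (q^2) (int L - j) * inv_qfac (q^2) (int L + j + 1))"
    using claim[OF nz seed[OF assms(1)] assms(2)] by simp
  also have "\<dots> = (\<Sum>j\<in>{-int L-1..int L}. cc q v j * qbinom (q ^ 2) (2 * int L + 1) (int L - j))"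
    unfolding qbinom_inv by (simp add: sum_distrib_left mult_ac)
  also have "\<dots> = (\<Sum>\<^sub>\<infinity> j \<in> (UNIV :: int set). cc q v j * qbinom (q ^ 2) (2 * int L + 1) (int L - j))"
  proof (rule infsum_finite[symmetric, THEN trans])
    show "finite {-int L-1..int L}" by simp
    show "(\<Sum>\<^sub>\<infinity>j\<in>{- int L - 1..int L}. cc q v j * qbinom (q\<^sup>2) (2 * int L + 1) (int L - j)) =
      (\<Sum>\<^sub>\<infinity>j\<in>UNIV. cc q v j * qbinom (q\<^sup>2) (2 * int L + 1) (int L - j))"
      by (rule infsum_cong_neutral) (auto simp: qbinom_def)
  qed
  finally show ?thesis unfolding f_def cc_def by simp
qed


end
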